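(* For every homogeneous polynomial $f(\mathbf{x}) \in \mathbb{C}[x_1,\ldots,x_n]$, we have $\mathrm{commRO}(f) \leq \mathrm{DPD}(f)$.
   Context: For $f \in \mathbb{C}[x_1,\ldots,x_n]$, the dimension of partial derivatives is $\mathrm{DPD}(f) := \dim_{\mathbb{C}} \mathrm{span}_{\mathbb{C}}\{\partial_{\mathbf{e}} f : \mathbf{e} \in \mathbb{N}^n\}$, where $\partial_{\mathbf{e}} f$ is the partial derivative of $f$ with respect to the monomial $x_1^{e_1}\cdots x_n^{e_n}$ (so $\mathbf{e}=\mathbf{0}$ gives $f$ itself). A read-once oblivious ABP (ROABP) of width $w$ computing an $n$-variate polynomial $f$ of individual degree at most $d$ consists of a permutation $\sigma$ of $[n]$, matrices $A_{j,k} \in \mathbb{C}^{w\times w}$ for $j\in[n]$, $0\le k\le d$, and vectors $\mathbf{u},\mathbf{v}\in\mathbb{C}^w$ such that $f(\mathbf{x}) = \mathbf{u}^{T} M_{\sigma(1)}(x_{\sigma(1)}) \cdots M_{\sigma(n)}(x_{\sigma(n)}) \mathbf{v}$, where $M_j(x_j) = \sum_{k=0}^{d} A_{j,k} x_j^k$. The $A_{j,k}$ are its coefficient matrices. A commutative ROABP is an ROABP whose coefficient matrices all pairwise commute. $\mathrm{commRO}(f)$ denotes the smallest $w$ such that some width-$w$ commutative ROABP computes $f$. *)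

theory Defs
  imports Complex_Main "HOL-Library.Function_Algebras" "Jordan_Normal_Form.Matrix"
begin

text \<open>A polynomial in the variables x_0, ..., x_(n-1) over the complex numbers is represented
  by its coefficient function: it maps an exponent vector e (a function nat to nat, giving the
  exponent of variable i as e i) to the coefficient of the monomial with exponents e.\<close>

type_synonym cpoly = "(nat \<Rightarrow> nat) \<Rightarrow> complex"

definition is_poly :: "nat \<Rightarrow> cpoly \<Rightarrow> bool" where
  "is_poly n f \<longleftrightarrow> finite {e. f e \<noteq> 0} \<and> (\<forall>e. f e \<noteq> 0 \<longrightarrow> (\<forall>i\<ge>n. e i = 0))"

definition homogeneous :: "nat \<Rightarrow> cpoly \<Rightarrow> bool" where
  "homogeneous n f \<longleftrightarrow> (\<exists>D. \<forall>e. f e \<noteq> 0 \<longrightarrow> (\<Sum>i<n. e i) = D)"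

definition poly_eval :: "nat \<Rightarrow> cpoly \<Rightarrow> (nat \<Rightarrow> complex) \<Rightarrow> complex" where
  "poly_eval n f x = (\<Sum>e\<in>{e. f e \<noteq> 0}. f e * (\<Prod>i<n. x i ^ e i))"

definition pderiv_mono :: "nat \<Rightarrow> (nat \<Rightarrow> nat) \<Rightarrow> cpoly \<Rightarrow> cpoly" where
  "pderiv_mono n e f = (\<lambda>m. (\<Prod>i<n. of_nat (fact (m i + e i)) / of_nat (fact (m i)))
                            * f (\<lambda>i. m i + e i))"

definition poly_scale :: "complex \<Rightarrow> cpoly \<Rightarrow> cpoly" where
  "poly_scale c f = (\<lambda>m. c * f m)"

definition DPD :: "nat \<Rightarrow> cpoly \<Rightarrow> nat" where
  "DPD n f = vector_space.dim poly_scale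
     {pderiv_mono n e f | e. \<forall>i\<ge>n. e i = 0}"

text \<open>A width-w ROABP with variable order sigma (a permutation of {0..<n}), coefficient
  matrices A j k (j < n, k \<le> d), and vectors u, v.\<close>
definition roabp_matrix :: "nat \<Rightarrow> nat \<Rightarrow> (nat \<Rightarrow> nat \<Rightarrow> complex mat) \<Rightarrow> nat \<Rightarrow> complex \<Rightarrow> complex mat" where
  "roabp_matrix w d A j t = mat w w (\<lambda>(r, c). \<Sum>k\<le>d. (A j k $$ (r, c)) * t ^ k)"

definition roabp_eval :: "nat \<Rightarrow> nat \<Rightarrow> nat \<Rightarrow> (nat \<Rightarrow> nat) \<Rightarrow> (nat \<Rightarrow> nat \<Rightarrow> complex mat)
     \<Rightarrow> complex vec \<Rightarrow> complex vec \<Rightarrow> (nat \<Rightarrow> complex) \<Rightarrow> complex" where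
  "roabp_eval n w d \<sigma> A u v x =
     u \<bullet> (foldr (*) (map (\<lambda>i. roabp_matrix w d A (\<sigma> i) (x (\<sigma> i))) [0..<n]) (1\<^sub>m w) *\<^sub>v v)"

definition comm_roabp_computes :: "nat \<Rightarrow> nat \<Rightarrow> cpoly \<Rightarrow> bool" where
  "comm_roabp_computes n w f \<longleftrightarrow>
     (\<exists>d \<sigma> A u v.
        bij_betw \<sigma> {..<n} {..<n} \<and>
        (\<forall>j k. j < n \<and> k \<le> d \<longrightarrow> A j k \<in> carrier_mat w w) \<and>
        u \<in> carrier_vec w \<and> v \<in> carrier_vec w \<and>
        (\<forall>j1 k1 j2 k2. j1 < n \<and> k1 \<le> d \<and> j2 < n \<and> k2 \<le> d \<longrightarrow>
            A j1 k1 * A j2 k2 = A j2 k2 * A j1 k1) \<and>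
        (\<forall>x. roabp_eval n w d \<sigma> A u v x = poly_eval n f x))"

definition commRO :: "nat \<Rightarrow> cpoly \<Rightarrow> nat" where
  "commRO n f = (LEAST w. comm_roabp_computes n w f)"

end

theory Submission
  imports Defs
begin


interpretation P: vector_space poly_scale
  by unfold_locales (auto simp: poly_scale_def fun_eq_iff algebra_simps)

lemma poly_scale_apply: "poly_scale c g m = c * g m"
  by (simp add: poly_scale_def)

lemma sum_fun_apply: "(sum g I :: cpoly) x = (\<Sum>i\<in>I. g i x)"
  by (induction I rule: infinite_finite_induct) auto

definition lin :: "(cpoly \<Rightarrow> cpoly) \<Rightarrow> bool" where
  "lin L \<longleftrightarrow> (\<forall>a b. L (a + b) = L a + L b) \<and> (\<forall>c a. L (poly_scale c a) = poly_scale c (L a))"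

lemma lin_zero: "lin L \<Longrightarrow> L 0 = 0"
  unfolding lin_def by (metis add_cancel_right_right add_0)

lemma lin_sum: "lin L \<Longrightarrow> L (sum g I) = (\<Sum>i\<in>I. L (g i))"
  by (induction I rule: infinite_finite_induct) (auto simp: lin_zero lin_def)

definition coordv :: "cpoly list \<Rightarrow> cpoly \<Rightarrow> complex vec" where
  "coordv bs g = vec (length bs) (\<lambda>s. P.representation (set bs) g (bs ! s))"

definition matof :: "cpoly list \<Rightarrow> (cpoly \<Rightarrow> cpoly) \<Rightarrow> complex mat" where
  "matof bs L = mat (length bs) (length bs) (\<lambda>(r,c). P.representation (set bs) (L (bs ! c)) (bs ! r))"

lemma sum_set_nth: "distinct bs \<Longrightarrow> (\<Sum>b\<in>set bs. F b) = (\<Sum>c\<in>{0..<length bs}. F (bs ! c))"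
proof -
  assume d: "distinct bs"
  have e: "set bs = (!) bs ` {0..<length bs}" by (auto simp: set_conv_nth)
  have "inj_on ((!) bs) {0..<length bs}" using d by (simp add: inj_on_nth)
  then show ?thesis unfolding e by (simp add: sum.reindex)
qed

definition pres :: "cpoly list \<Rightarrow> (cpoly \<Rightarrow> cpoly) \<Rightarrow> bool" where
  "pres bs L \<longleftrightarrow> (\<forall>g\<in>P.span (set bs). L g \<in> P.span (set bs))"

lemma presD: "pres bs L \<Longrightarrow> c < length bs \<Longrightarrow> L (bs ! c) \<in> P.span (set bs)"
  unfolding pres_def by (simp add: P.span_base)

lemma coordv_carrier[simp]: "coordv bs g \<in> carrier_vec (length bs)"
  by (simp add: coordv_def)

lemma matof_carrier[simp]: "matof bs L \<in> carrier_mat (length bs) (length bs)"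
  by (simp add: matof_def)

context
  fixes bs :: "cpoly list"
  assumes dist: "distinct bs" and indep: "P.independent (set bs)"
begin

lemma expand: "g \<in> P.span (set bs) \<Longrightarrow>
   g = (\<Sum>c\<in>{0..<length bs}. poly_scale (P.representation (set bs) g (bs ! c)) (bs ! c))"
proof -
  assume g: "g \<in> P.span (set bs)"
  have "g = (\<Sum>b\<in>set bs. poly_scale (P.representation (set bs) g b) b)"
    using P.sum_representation_eq[OF indep g, of "set bs"] by simp
  also have "\<dots> = (\<Sum>c\<in>{0..<length bs}. poly_scale (P.representation (set bs) g (bs ! c)) (bs ! c))"
    by (rule sum_set_nth[OF dist])
  finally show ?thesis .
qed

lemma matvec:
  assumes L: "lin L" and pres: "\<And>c. c < length bs \<Longrightarrow> L (bs ! c) \<in> P.span (set bs)"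
    and g: "g \<in> P.span (set bs)"
  shows "matof bs L *\<^sub>v coordv bs g = coordv bs (L g)"
proof (rule eq_vecI)
  show "dim_vec (matof bs L *\<^sub>v coordv bs g) = dim_vec (coordv bs (L g))"
    by (simp add: matof_def coordv_def)
  fix r assume "r < dim_vec (coordv bs (L g))"
  hence r: "r < length bs" by (simp add: coordv_def)
  let ?R = "P.representation (set bs)"
  have "L g = (\<Sum>c\<in>{0..<length bs}. poly_scale (?R g (bs ! c)) (L (bs ! c)))"
    by (subst expand[OF g]) (simp add: lin_sum[OF L] L[unfolded lin_def])
  moreover have "?R (\<Sum>c\<in>{0..<length bs}. poly_scale (?R g (bs ! c)) (L (bs ! c)))
     = (\<lambda>b. \<Sum>c\<in>{0..<length bs}. ?R (poly_scale (?R g (bs ! c)) (L (bs ! c))) b)"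
    by (rule P.representation_sum[OF indep]) (auto intro: P.span_scale pres)
  moreover have "\<And>c. c \<in> {0..<length bs} \<Longrightarrow> ?R (poly_scale (?R g (bs ! c)) (L (bs ! c))) = (\<lambda>b. ?R g (bs ! c) * ?R (L (bs ! c)) b)"
    by (rule P.representation_scale[OF indep]) (auto intro: pres)
  ultimately have "?R (L g) (bs ! r) = (\<Sum>c\<in>{0..<length bs}. ?R g (bs ! c) * ?R (L (bs ! c)) (bs ! r))"
    by simp
  then show "(matof bs L *\<^sub>v coordv bs g) $ r = coordv bs (L g) $ r"
    using r by (simp add: matof_def coordv_def scalar_prod_def mult.commute)
qed

lemma matmul:
  assumes L1: "lin L1" "pres bs L1" and L2: "lin L2" "pres bs L2"
  shows "matof bs L1 * matof bs L2 = matof bs (\<lambda>g. L1 (L2 g))"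
proof (rule eq_matI)
  fix i j assume "i < dim_row (matof bs (\<lambda>g. L1 (L2 g)))" "j < dim_col (matof bs (\<lambda>g. L1 (L2 g)))"
  hence i: "i < length bs" and j: "j < length bs" by (auto simp: matof_def)
  have c: "col (matof bs L2) j = coordv bs (L2 (bs ! j))"
    using j by (simp add: matof_def coordv_def)
  have "(matof bs L1 * matof bs L2) $$ (i, j) = (matof bs L1 *\<^sub>v col (matof bs L2) j) $ i"
    using i j by (simp add: matof_def)
  also have "\<dots> = coordv bs (L1 (L2 (bs ! j))) $ i"
    unfolding c by (subst matvec[OF L1(1) presD[OF L1(2)] presD[OF L2(2) j]]) simp_all
  also have "\<dots> = matof bs (\<lambda>g. L1 (L2 g)) $$ (i, j)"
    using i j by (simp add: matof_def coordv_def)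
  finally show "(matof bs L1 * matof bs L2) $$ (i, j) = matof bs (\<lambda>g. L1 (L2 g)) $$ (i, j)" .
qed (simp_all add: matof_def)

lemma matsum:
  assumes pr: "\<And>k. k \<in> K \<Longrightarrow> pres bs (L k)"
  shows "matof bs (\<lambda>g. \<Sum>k\<in>K. poly_scale (t k) (L k g))
     = mat (length bs) (length bs) (\<lambda>(r,c). \<Sum>k\<in>K. matof bs (L k) $$ (r,c) * t k)"
proof (rule eq_matI)
  let ?R = "P.representation (set bs)"
  fix i j assume "i < dim_row (mat (length bs) (length bs) (\<lambda>(r,c). \<Sum>k\<in>K. matof bs (L k) $$ (r,c) * t k))"
    "j < dim_col (mat (length bs) (length bs) (\<lambda>(r,c). \<Sum>k\<in>K. matof bs (L k) $$ (r,c) * t k))"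
  hence i: "i < length bs" and j: "j < length bs" by auto
  have "?R (\<Sum>k\<in>K. poly_scale (t k) (L k (bs ! j))) = (\<lambda>b. \<Sum>k\<in>K. ?R (poly_scale (t k) (L k (bs ! j))) b)"
    by (rule P.representation_sum[OF indep]) (auto intro: P.span_scale presD[OF pr] j)
  moreover have "\<And>k. k \<in> K \<Longrightarrow> ?R (poly_scale (t k) (L k (bs ! j))) = (\<lambda>b. t k * ?R (L k (bs ! j)) b)"
    by (rule P.representation_scale[OF indep]) (auto intro: presD[OF pr] j)
  ultimately show "matof bs (\<lambda>g. \<Sum>k\<in>K. poly_scale (t k) (L k g)) $$ (i, j) =
         mat (length bs) (length bs) (\<lambda>(r,c). \<Sum>k\<in>K. matof bs (L k) $$ (r,c) * t k) $$ (i, j)"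
    using i j by (simp add: matof_def mult.commute)
qed (simp_all add: matof_def)

lemma uvec:
  assumes h: "h \<in> P.span (set bs)"
  shows "vec (length bs) (\<lambda>c. (bs ! c) z) \<bullet> coordv bs h = h z"
proof -
  have "h z = (\<Sum>c\<in>{0..<length bs}. poly_scale (P.representation (set bs) h (bs ! c)) (bs ! c)) z"
    using expand[OF h] by simp
  then show ?thesis by (simp add: sum_fun_apply poly_scale_apply scalar_prod_def coordv_def mult.commute)
qed

lemma foldr_mat:
  assumes "\<And>i. i \<in> set is \<Longrightarrow> lin (S i) \<and> pres bs (S i)" and "g \<in> P.span (set bs)"
  shows "foldr (*) (map (\<lambda>i. matof bs (S i)) is) (1\<^sub>m (length bs)) \<in> carrier_mat (length bs) (length bs)
    \<and> foldr (*) (map (\<lambda>i. matof bs (S i)) is) (1\<^sub>m (length bs)) *\<^sub>v coordv bs g = coordv bs (foldr S is g)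
    \<and> foldr S is g \<in> P.span (set bs)"
  using assms
proof (induction "is")
  case Nil
  then show ?case by simp
next
  case (Cons i "is")
  let ?F = "foldr (*) (map (\<lambda>i. matof bs (S i)) is) (1\<^sub>m (length bs))"
  have IH: "?F \<in> carrier_mat (length bs) (length bs)" "?F *\<^sub>v coordv bs g = coordv bs (foldr S is g)"
     "foldr S is g \<in> P.span (set bs)" using Cons by auto
  have Si: "lin (S i)" "pres bs (S i)" using Cons.prems by auto
  have "(matof bs (S i) * ?F) *\<^sub>v coordv bs g = matof bs (S i) *\<^sub>v (?F *\<^sub>v coordv bs g)"
    using IH(1) by (simp add: assoc_mult_mat_vec[of _ "length bs" "length bs" _ "length bs"])
  also have "\<dots> = coordv bs (S i (foldr S is g))"
    unfolding IH(2) by (rule matvec[OF Si(1) presD[OF Si(2)] IH(3)])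
  finally show ?case using IH Si(2) mult_carrier_mat[OF matof_carrier IH(1)] by (auto simp: pres_def)
qed

end


definition Tj :: "nat \<Rightarrow> nat \<Rightarrow> cpoly \<Rightarrow> cpoly" where
  "Tj j k g = (\<lambda>m. (fact (m j + k) / (fact k * fact (m j)) :: complex) * g (m(j := m j + k)))"

definition Sj :: "nat \<Rightarrow> nat \<Rightarrow> complex \<Rightarrow> cpoly \<Rightarrow> cpoly" where
  "Sj d j t g = (\<Sum>k\<in>{..d}. poly_scale (t ^ k) (Tj j k g))"

lemma lin_Tj: "lin (Tj j k)"
  by (auto simp: lin_def Tj_def poly_scale_def fun_eq_iff algebra_simps)

lemma lin_Sj: "lin (Sj d j t)"
  using lin_Tj unfolding lin_def Sj_def
  by (auto simp: P.scale_right_distrib sum.distrib P.scale_scale mult.commute P.scale_sum_right)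

lemma Tj_comm: "Tj j1 k1 (Tj j2 k2 g) = Tj j2 k2 (Tj j1 k1 g)"
proof (cases "j1 = j2")
  case True
  show ?thesis unfolding True Tj_def
  proof (rule ext)
    fix m
    have "fact (m j2 + k1) / (fact k1 * fact (m j2)) * (fact (m j2 + k1 + k2) / (fact k2 * fact (m j2 + k1)))
        = (fact (m j2 + k2) / (fact k2 * fact (m j2)) * (fact (m j2 + k2 + k1) / (fact k1 * fact (m j2 + k2))) :: complex)"
      by (simp add: field_simps add.commute add.left_commute)
    then show "fact (m j2 + k1) / (fact k1 * fact (m j2)) *
         (fact ((m(j2 := m j2 + k1)) j2 + k2) / (fact k2 * fact ((m(j2 := m j2 + k1)) j2)) *
          g (m(j2 := m j2 + k1, j2 := (m(j2 := m j2 + k1)) j2 + k2))) =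
         fact (m j2 + k2) / (fact k2 * fact (m j2)) *
         (fact ((m(j2 := m j2 + k2)) j2 + k1) / (fact k1 * fact ((m(j2 := m j2 + k2)) j2)) *
          g (m(j2 := m j2 + k2, j2 := (m(j2 := m j2 + k2)) j2 + k1)))"
      by (simp add: add.commute add.left_commute)
  qed
next
  case False
  then show ?thesis unfolding Tj_def by (auto simp: fun_eq_iff fun_upd_twist mult_ac)
qed


lemma sc_lemma: "(fact (a + k) / (fact k * fact a) :: complex) * (fact (a + k + b) / fact (a + k))
      = 1 / fact k * (fact (a + (b + k)) / fact a)"
proof -
  have "a + (b + k) = a + k + b" by simp
  moreover have "(fact (a + k) :: complex) \<noteq> 0" "(fact k :: complex) \<noteq> 0" "(fact a :: complex) \<noteq> 0" by auto
  ultimately show ?thesis by (simp add: field_simps)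
qed

lemma Tj_pderiv:
  assumes j: "j < n"
  shows "Tj j k (pderiv_mono n e f) = poly_scale (1 / fact k) (pderiv_mono n (e(j := e j + k)) f)"
proof (rule ext)
  fix m
  let ?m' = "m(j := m j + k)" and ?e' = "e(j := e j + k)"
  have arg: "(\<lambda>i. ?m' i + e i) = (\<lambda>i. m i + ?e' i)" by (auto simp: fun_eq_iff)
  let ?P = "\<Prod>i\<in>{..<n} - {j}. (of_nat (fact (m i + e i)) / of_nat (fact (m i)) :: complex)"
  have p1: "(\<Prod>i<n. of_nat (fact (?m' i + e i)) / of_nat (fact (?m' i)) :: complex)
      = fact (m j + k + e j) / fact (m j + k) * ?P"
    using j by (subst prod.remove[of _ j]) (auto intro!: prod.cong)
  have p2: "(\<Prod>i<n. of_nat (fact (m i + ?e' i)) / of_nat (fact (m i)) :: complex)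
      = fact (m j + (e j + k)) / fact (m j) * ?P"
    using j by (subst prod.remove[of _ j]) (auto intro!: prod.cong)
  have l: "Tj j k (pderiv_mono n e f) m = (fact (m j + k) / (fact k * fact (m j)) :: complex) *
     ((\<Prod>i<n. of_nat (fact (?m' i + e i)) / of_nat (fact (?m' i))) * f (\<lambda>i. ?m' i + e i))"
    unfolding Tj_def pderiv_mono_def by (rule refl)
  have r: "poly_scale (1 / fact k) (pderiv_mono n ?e' f) m = 1 / fact k *
     ((\<Prod>i<n. of_nat (fact (m i + ?e' i)) / of_nat (fact (m i))) * f (\<lambda>i. m i + ?e' i))"
    unfolding poly_scale_def pderiv_mono_def by (rule refl)
  show "Tj j k (pderiv_mono n e f) m = poly_scale (1 / fact k) (pderiv_mono n ?e' f) m"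
    unfolding l r p1 p2 arg using sc_lemma[of "m j" k "e j"] by (simp only: mult.assoc[symmetric])
qed

definition S0 :: "nat \<Rightarrow> cpoly \<Rightarrow> cpoly set" where
  "S0 n f = {pderiv_mono n e f | e. \<forall>i\<ge>n. e i = 0}"

lemma Tj_span:
  assumes j: "j < n" and g: "g \<in> P.span (S0 n f)"
  shows "Tj j k g \<in> P.span (S0 n f)"
  using g
proof (induction rule: P.span_induct_alt)
  case base
  then show ?case by (simp only: lin_zero[OF lin_Tj] P.span_zero)
next
  case (step c x y)
  then obtain e where e: "\<forall>i\<ge>n. e i = 0" "x = pderiv_mono n e f" by (auto simp: S0_def)
  have tx: "Tj j k x \<in> P.span (S0 n f)"
    unfolding e(2) Tj_pderiv[OF j] using e(1) j
    by (intro P.span_scale P.span_base) (auto simp: S0_def intro!: exI[of _ "e(j := e j + k)"])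
  have eq: "Tj j k (poly_scale c x + y) = poly_scale c (Tj j k x) + Tj j k y"
    using lin_Tj[of j k] unfolding lin_def by simp
  show ?case unfolding eq by (intro P.span_add P.span_scale tx step.IH)
qed

lemma Sj_span:
  assumes j: "j < n" and g: "g \<in> P.span (S0 n f)"
  shows "Sj d j t g \<in> P.span (S0 n f)"
  unfolding Sj_def by (intro P.span_sum P.span_scale Tj_span[OF j g])

lemma f_in_S0: "f \<in> S0 n f"
proof -
  have "pderiv_mono n (\<lambda>_. 0) f = f" by (simp add: pderiv_mono_def)
  then show ?thesis unfolding S0_def by (intro CollectI exI[of _ "\<lambda>_. 0"]) simp
qed



lemma eval_claim:
  fixes x :: "nat \<Rightarrow> complex"
  assumes fp: "is_poly n f" and hd: "\<forall>e i. f e \<noteq> 0 \<longrightarrow> i < n \<longrightarrow> e i \<le> d"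
    and jn: "j \<le> n"
  shows "\<forall>m. (\<forall>i\<ge>j. m i = 0) \<longrightarrow> foldr (\<lambda>i. Sj d i (x i)) [j..<n] f m
     = (\<Sum>e\<in>{e. f e \<noteq> 0 \<and> (\<forall>i<j. e i = m i)}. f e * (\<Prod>i\<in>{j..<n}. x i ^ e i))"
  using jn
proof (induction rule: inc_induct)
  case base
  show ?case
  proof (intro allI impI)
    fix m :: "nat \<Rightarrow> nat" assume m: "\<forall>i\<ge>n. m i = 0"
    have sub: "{e. f e \<noteq> 0 \<and> (\<forall>i<n. e i = m i)} = (if f m \<noteq> 0 then {m} else {})"
    proof -
      have "e = m" if "f e \<noteq> 0" "\<forall>i<n. e i = m i" for e
      proof (rule ext)
        fix i show "e i = m i"
          using that m fp unfolding is_poly_def by (cases "i < n") auto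
      qed
      then show ?thesis by auto
    qed
    show "foldr (\<lambda>i. Sj d i (x i)) [n..<n] f m = (\<Sum>e\<in>{e. f e \<noteq> 0 \<and> (\<forall>i<n. e i = m i)}. f e * (\<Prod>i\<in>{n..<n}. x i ^ e i))"
      unfolding sub by simp
  qed
next
  case (step j)
  show ?case
  proof (intro allI impI)
    fix m :: "nat \<Rightarrow> nat" assume m: "\<forall>i\<ge>j. m i = 0"
    let ?R = "foldr (\<lambda>i. Sj d i (x i)) [Suc j..<n] f"
    let ?P = "\<lambda>e. \<Prod>i\<in>{Suc j..<n}. x i ^ e i"
    let ?A = "{e. f e \<noteq> 0 \<and> (\<forall>i<j. e i = m i)}"
    let ?Ak = "\<lambda>k. {e. f e \<noteq> 0 \<and> (\<forall>i<Suc j. e i = (m(j := k)) i)}"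
    have mj: "m j = 0" using m by simp
    have fin: "finite ?A" using fp unfolding is_poly_def by (rule_tac finite_subset[of _ "{e. f e \<noteq> 0}"]) auto
    have "foldr (\<lambda>i. Sj d i (x i)) [j..<n] f m = Sj d j (x j) ?R m"
      using step.hyps(2) by (simp add: upt_conv_Cons)
    also have "\<dots> = (\<Sum>k\<le>d. x j ^ k * ?R (m(j := k)))"
      unfolding Sj_def sum_fun_apply poly_scale_apply Tj_def by (simp add: mj)
    also have "\<dots> = (\<Sum>k\<le>d. x j ^ k * (\<Sum>e\<in>?Ak k. f e * ?P e))"
    proof (rule sum.cong[OF refl])
      fix k assume "k \<in> {..d}"
      have "\<forall>i\<ge>Suc j. (m(j := k)) i = 0" using m by auto
      then show "x j ^ k * ?R (m(j := k)) = x j ^ k * (\<Sum>e\<in>?Ak k. f e * ?P e)"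
        using step.IH by simp
    qed
    also have "\<dots> = (\<Sum>k\<le>d. (\<Sum>e\<in>{e \<in> ?A. e j = k}. f e * (x j ^ e j * ?P e)))"
    proof (rule sum.cong[OF refl])
      fix k assume "k \<in> {..d}"
      have "?Ak k = {e \<in> ?A. e j = k}" by (auto simp: less_Suc_eq)
      then show "x j ^ k * (\<Sum>e\<in>?Ak k. f e * ?P e) = (\<Sum>e\<in>{e \<in> ?A. e j = k}. f e * (x j ^ e j * ?P e))"
        by (simp add: sum_distrib_left mult_ac)
    qed
    also have "\<dots> = (\<Sum>e\<in>?A. f e * (x j ^ e j * ?P e))"
      by (rule sum.group[OF fin]) (use hd step.hyps(2) in auto)
    also have "\<dots> = (\<Sum>e\<in>?A. f e * (\<Prod>i\<in>{j..<n}. x i ^ e i))"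
      using step.hyps(2) by (simp add: prod.atLeast_Suc_lessThan)
    finally show "foldr (\<lambda>i. Sj d i (x i)) [j..<n] f m = (\<Sum>e\<in>?A. f e * (\<Prod>i\<in>{j..<n}. x i ^ e i))" .
  qed
qed



lemma S0_finite:
  assumes fp: "is_poly n f" and hd: "\<forall>e i. f e \<noteq> 0 \<longrightarrow> i < n \<longrightarrow> e i \<le> d"
  shows "finite (S0 n f)"
proof -
  let ?E = "{e. (\<forall>i\<ge>n. e i = 0) \<and> (\<forall>i<n. e i \<le> d)}"
  have "?E \<subseteq> (\<lambda>l i. if i < n then l ! i else 0) ` {l. set l \<subseteq> {..d} \<and> length l = n}"
  proof
    fix e assume e: "e \<in> ?E"
    have "e = (\<lambda>i. if i < n then map e [0..<n] ! i else 0)" using e by (auto simp: fun_eq_iff)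
    moreover have "map e [0..<n] \<in> {l. set l \<subseteq> {..d} \<and> length l = n}" using e by auto
    ultimately show "e \<in> (\<lambda>l i. if i < n then l ! i else 0) ` {l. set l \<subseteq> {..d} \<and> length l = n}"
      by blast
  qed
  hence finE: "finite ?E" by (rule finite_subset) (intro finite_imageI finite_lists_length_eq, simp)
  have "S0 n f \<subseteq> insert 0 ((\<lambda>e. pderiv_mono n e f) ` ?E)"
  proof
    fix g assume "g \<in> S0 n f"
    then obtain e where e: "\<forall>i\<ge>n. e i = 0" "g = pderiv_mono n e f" by (auto simp: S0_def)
    show "g \<in> insert 0 ((\<lambda>e. pderiv_mono n e f) ` ?E)"
    proof (cases "g = 0")
      case False
      then obtain m where "g m \<noteq> 0" by (auto simp: fun_eq_iff)
      hence "f (\<lambda>i. m i + e i) \<noteq> 0" using e(2) by (auto simp: pderiv_mono_def)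
      hence "\<forall>i<n. (\<lambda>i. m i + e i) i \<le> d" using hd by blast
      hence "\<forall>i<n. e i \<le> d" by auto
      thus ?thesis using e by blast
    qed simp
  qed
  then show ?thesis using finE by (meson finite_imageI finite_insert finite_subset)
qed

theorem theorem1p4:
  fixes n :: nat and f :: cpoly
  assumes "is_poly n f" and "homogeneous n f"
  shows "commRO n f \<le> DPD n f"
proof -
  note fp = assms(1)
  define d where "d = (\<Sum>e\<in>{e. f e \<noteq> 0}. \<Sum>i<n. e i)"
  have fin: "finite {e. f e \<noteq> 0}" using fp by (simp add: is_poly_def)
  have hd0: "e i \<le> d" if "f e \<noteq> 0" "i < n" for e i
  proof -
    have "e i \<le> (\<Sum>i<n. e i)" using that by (intro member_le_sum) auto
    also have "\<dots> \<le> d" unfolding d_def using that fin by (intro member_le_sum) auto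
    finally show ?thesis .
  qed
  have hd: "\<forall>e i. f e \<noteq> 0 \<longrightarrow> i < n \<longrightarrow> e i \<le> d" using hd0 by blast
  have dpd: "DPD n f = P.dim (S0 n f)" by (simp add: DPD_def S0_def)
  obtain B where B: "B \<subseteq> S0 n f" "P.independent B" "S0 n f \<subseteq> P.span B" "card B = P.dim (S0 n f)"
    by (rule P.basis_exists)
  have finB: "finite B" using B(1) S0_finite[of n f d, OF fp hd] by (rule finite_subset)
  obtain bs where bs: "distinct bs" "set bs = B" using finite_distinct_list[OF finB] by blast
  define w where "w = length bs"
  have wdim: "w = DPD n f" unfolding w_def dpd using B(4) bs by (metis distinct_card)
  have indep: "P.independent (set bs)" using B(2) bs by simp
  have spaneq: "P.span (set bs) = P.span (S0 n f)"
  proof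
    show "P.span (set bs) \<subseteq> P.span (S0 n f)" using B(1) bs(2) by (simp add: P.span_mono)
    show "P.span (S0 n f) \<subseteq> P.span (set bs)" using B(3) bs(2) by (simp add: P.span_minimal)
  qed
  have presT: "pres bs (Tj j k)" if "j < n" for j k
    unfolding pres_def spaneq using Tj_span[OF that] by blast
  have presS: "pres bs (Sj d j t)" if "j < n" for j t
    unfolding pres_def spaneq using Sj_span[OF that] by blast
  define A where "A = (\<lambda>j k. matof bs (Tj j k))"
  define u where "u = vec w (\<lambda>c. (bs ! c) (\<lambda>_. 0))"
  define v where "v = coordv bs f"
  have fspan: "f \<in> P.span (set bs)" unfolding spaneq by (rule P.span_base[OF f_in_S0])
  have rm: "roabp_matrix w d A i t = matof bs (Sj d i t)" if "i < n" for i t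
  proof -
    have "Sj d i t = (\<lambda>g. \<Sum>k\<in>{..d}. poly_scale (t ^ k) (Tj i k g))" by (simp add: fun_eq_iff Sj_def)
    then show ?thesis
      unfolding roabp_matrix_def A_def w_def
      using matsum[OF bs(1) indep, of "{..d}" "Tj i" "\<lambda>k. t ^ k"] presT[OF that] by simp
  qed
  have c1: "bij_betw id {..<n} {..<n}" by simp
  have c2: "\<forall>j k. j < n \<and> k \<le> d \<longrightarrow> A j k \<in> carrier_mat w w" unfolding A_def w_def by simp
  have c3: "u \<in> carrier_vec w" unfolding u_def by simp
  have c4: "v \<in> carrier_vec w" unfolding v_def w_def by simp
  have c5: "\<forall>j1 k1 j2 k2. j1 < n \<and> k1 \<le> d \<and> j2 < n \<and> k2 \<le> d \<longrightarrow>
            A j1 k1 * A j2 k2 = A j2 k2 * A j1 k1"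
  proof (intro allI impI)
    fix j1 k1 j2 k2 assume h: "j1 < n \<and> k1 \<le> d \<and> j2 < n \<and> k2 \<le> d"
    have "matof bs (Tj j1 k1) * matof bs (Tj j2 k2) = matof bs (\<lambda>g. Tj j1 k1 (Tj j2 k2 g))"
      using h by (intro matmul[OF bs(1) indep lin_Tj presT lin_Tj presT]) auto
    also have "\<dots> = matof bs (\<lambda>g. Tj j2 k2 (Tj j1 k1 g))" by (simp add: Tj_comm)
    also have "\<dots> = matof bs (Tj j2 k2) * matof bs (Tj j1 k1)"
      using h by (intro matmul[OF bs(1) indep lin_Tj presT lin_Tj presT, symmetric]) auto
    finally show "A j1 k1 * A j2 k2 = A j2 k2 * A j1 k1" unfolding A_def .
  qed
  have c6: "\<forall>x. roabp_eval n w d id A u v x = poly_eval n f x"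
  proof
    fix x :: "nat \<Rightarrow> complex"
    have maps: "map (\<lambda>i. roabp_matrix w d A i (x i)) [0..<n] = map (\<lambda>i. matof bs (Sj d i (x i))) [0..<n]"
      using rm by simp
    have fm: "foldr (*) (map (\<lambda>i. matof bs (Sj d i (x i))) [0..<n]) (1\<^sub>m w) *\<^sub>v v
       = coordv bs (foldr (\<lambda>i. Sj d i (x i)) [0..<n] f)"
         "foldr (\<lambda>i. Sj d i (x i)) [0..<n] f \<in> P.span (set bs)"
      using foldr_mat[OF bs(1) indep, of "[0..<n]" "\<lambda>i. Sj d i (x i)" f] lin_Sj presS fspan
      unfolding v_def w_def by auto
    have ev: "foldr (\<lambda>i. Sj d i (x i)) [0..<n] f (\<lambda>_. 0) = poly_eval n f x"
      using eval_claim[where n=n and f=f and d=d and x=x and j=0, OF fp hd] by (simp add: poly_eval_def atLeast0LessThan)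
    show "roabp_eval n w d id A u v x = poly_eval n f x"
      unfolding roabp_eval_def id_apply maps fm(1) unfolding u_def w_def
      using uvec[OF bs(1) indep fm(2)] ev by simp
  qed
  have comp: "comm_roabp_computes n w f"
    unfolding comm_roabp_computes_def using c1 c2 c3 c4 c5 c6 by blast
  have "commRO n f \<le> w" unfolding commRO_def using comp by (rule Least_le)
  then show ?thesis using wdim by simp
qed


end
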